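(* Let $(X,\tau,\le)$ be a Noetherian Priestley space and $f\colon X\setminus I(f)\to X$ a partially continuous self-map such that $I(f)$ is clopen. Then $h_{\mathrm{top}}(f)=0$. In particular, the topological entropy of any continuous self-map of a Noetherian Priestley space is $0$.
   Context: A Priestley space is a partially ordered set $(X,\le)$ with a quasi-compact topology such that whenever $y\not\le x$ there is a clopen down-set containing $x$ but not $y$; it is compact Hausdorff. It is Noetherian if every decreasing sequence of closed down-sets is eventually stationary. No order-preservation of $f$ is assumed. A partially continuous self-map is a continuous map $f\colon X\setminus I(f)\to X$ with $I(f)\subset X$ closed. Its entropy: put $\xi_0=X$, $\xi_n=\{x\in X\setminus I(f): f(x)\in\xi_{n-1}\}$; for a symmetric entourage $\mathcal E$ of the canonical uniform structure (all neighbourhoods of the diagonal) and $x\in\xi_n$, $B^n_{\mathcal E}(x)=\{y\in\xi_n:(f^i(x),f^i(y))\in\mathcal E, 0\le i\le n\}$; $S(n,\mathcal E)$ is the maximal cardinality of $E\subset\xi_n$ with $x\notin B^n_{\mathcal E}(y)$ for distinct $x,y\in E$; $h_{\mathrm{top}}(f)=\sup_{\mathcal E}\limsup_n\frac1n\log S(n,\mathcal E)$ (and $-\infty$ if some $\xi_n$ is empty). For continuous $f$ ($I(f)=\emptyset$) this is the usual topological entropy. *)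

theory Defs
  imports "HOL-Analysis.Analysis" "HOL-Library.Extended_Real"
begin

definition partial_order_rel :: "'a set \<Rightarrow> ('a \<Rightarrow> 'a \<Rightarrow> bool) \<Rightarrow> bool" where
  "partial_order_rel X le \<longleftrightarrow>
     (\<forall>x\<in>X. le x x) \<and>
     (\<forall>x\<in>X. \<forall>y\<in>X. le x y \<and> le y x \<longrightarrow> x = y) \<and>
     (\<forall>x\<in>X. \<forall>y\<in>X. \<forall>z\<in>X. le x y \<and> le y z \<longrightarrow> le x z)"

definition is_downset :: "'a set \<Rightarrow> ('a \<Rightarrow> 'a \<Rightarrow> bool) \<Rightarrow> 'a set \<Rightarrow> bool" where
  "is_downset X le D \<longleftrightarrow> D \<subseteq> X \<and> (\<forall>x\<in>D. \<forall>y\<in>X. le y x \<longrightarrow> y \<in> D)"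

definition priestley_space :: "'a topology \<Rightarrow> ('a \<Rightarrow> 'a \<Rightarrow> bool) \<Rightarrow> bool" where
  "priestley_space T le \<longleftrightarrow>
     partial_order_rel (topspace T) le \<and> compact_space T \<and>
     (\<forall>x\<in>topspace T. \<forall>y\<in>topspace T. \<not> le y x \<longrightarrow>
        (\<exists>U. openin T U \<and> closedin T U \<and> is_downset (topspace T) le U \<and> x \<in> U \<and> y \<notin> U))"

definition noetherian_space :: "'a topology \<Rightarrow> ('a \<Rightarrow> 'a \<Rightarrow> bool) \<Rightarrow> bool" where
  "noetherian_space T le \<longleftrightarrow>
     (\<forall>F :: nat \<Rightarrow> 'a set.
        (\<forall>n. closedin T (F n) \<and> is_downset (topspace T) le (F n)) \<and> (\<forall>n. F (Suc n) \<subseteq> F n)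
        \<longrightarrow> (\<exists>N. \<forall>n\<ge>N. F n = F N))"

definition partially_continuous :: "'a topology \<Rightarrow> ('a \<Rightarrow> 'a) \<Rightarrow> 'a set \<Rightarrow> bool" where
  "partially_continuous T f I \<longleftrightarrow>
     closedin T I \<and> continuous_map (subtopology T (topspace T - I)) T f"

primrec xi :: "'a topology \<Rightarrow> ('a \<Rightarrow> 'a) \<Rightarrow> 'a set \<Rightarrow> nat \<Rightarrow> 'a set" where
  "xi T f I 0 = topspace T"
| "xi T f I (Suc n) = {x \<in> topspace T - I. f x \<in> xi T f I n}"

text \<open>Symmetric entourages of the canonical uniformity: symmetric neighbourhoods of the diagonal.\<close>
definition sym_entourage :: "'a topology \<Rightarrow> ('a \<times> 'a) set \<Rightarrow> bool" where
  "sym_entourage T E \<longleftrightarrow> E \<subseteq> topspace T \<times> topspace T \<and>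
     (\<forall>x y. (x, y) \<in> E \<longrightarrow> (y, x) \<in> E) \<and>
     (\<exists>U. openin (prod_topology T T) U \<and> (\<lambda>x. (x, x)) ` topspace T \<subseteq> U \<and> U \<subseteq> E)"

definition bowen_ball :: "'a topology \<Rightarrow> ('a \<Rightarrow> 'a) \<Rightarrow> 'a set \<Rightarrow> nat \<Rightarrow> ('a \<times> 'a) set \<Rightarrow> 'a \<Rightarrow> 'a set" where
  "bowen_ball T f I n E x = {y \<in> xi T f I n. \<forall>i\<le>n. ((f ^^ i) x, (f ^^ i) y) \<in> E}"

definition sep_num :: "'a topology \<Rightarrow> ('a \<Rightarrow> 'a) \<Rightarrow> 'a set \<Rightarrow> nat \<Rightarrow> ('a \<times> 'a) set \<Rightarrow> ereal" where
  "sep_num T f I n E = Sup {ereal (real (card F)) | F. finite F \<and> F \<subseteq> xi T f I n \<and>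
      (\<forall>x\<in>F. \<forall>y\<in>F. x \<noteq> y \<longrightarrow> x \<notin> bowen_ball T f I n E y)}"

definition growth_term :: "'a topology \<Rightarrow> ('a \<Rightarrow> 'a) \<Rightarrow> 'a set \<Rightarrow> ('a \<times> 'a) set \<Rightarrow> nat \<Rightarrow> ereal" where
  "growth_term T f I E n =
     (if sep_num T f I n E = \<infinity> then \<infinity>
      else ereal (ln (real_of_ereal (sep_num T f I n E)) / real n))"

definition htop :: "'a topology \<Rightarrow> ('a \<Rightarrow> 'a) \<Rightarrow> 'a set \<Rightarrow> ereal" where
  "htop T f I = (if \<exists>n. xi T f I n = {} then -\<infinity>
     else (SUP E \<in> {E. sym_entourage T E}. limsup (growth_term T f I E)))"

end

theory Submission
  imports Defs
begin


fun itin :: "('a \<Rightarrow> nat) \<Rightarrow> ('a \<Rightarrow> 'a) \<Rightarrow> 'a set \<Rightarrow> nat \<Rightarrow> 'a \<Rightarrow> nat option list" where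
  "itin p f I 0 x = []"
| "itin p f I (Suc n) x = Some (p x) # (if x \<in> I then replicate n None else itin p f I n (f x))"

lemma itin_len[simp]: "length (itin p f I n x) = n"
  by (induction n arbitrary: x) auto

lemma take_itin: "m \<le> n \<Longrightarrow> take m (itin p f I n x) = itin p f I m x"
proof (induction n arbitrary: m x)
  case 0 then show ?case by simp
next
  case (Suc n) then show ?case by (cases m) auto
qed

lemma itin_add:
  assumes fwd: "\<forall>y\<in>Y. y \<notin> I \<longrightarrow> f y \<in> Y" and "x \<in> Y"
  shows "(\<exists>z\<in>Y. itin p f I (a+b) x = itin p f I a x @ itin p f I b z)
     \<or> itin p f I (a+b) x = itin p f I a x @ replicate b None"
  using assms(2)
proof (induction a arbitrary: x)
  case 0 then show ?case by auto
next
  case (Suc a)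
  show ?case
  proof (cases "x \<in> I")
    case True then show ?thesis by (simp add: replicate_add)
  next
    case False
    then have "f x \<in> Y" using fwd Suc.prems by auto
    from Suc.IH[OF this] False show ?thesis by auto
  qed
qed

lemma real_bound_rec:
  fixes a g :: "nat \<Rightarrow> real"
  assumes m: "m \<ge> 1"
    and a0: "\<And>n. 0 \<le> a n"
    and step: "\<And>n. n \<ge> m \<Longrightarrow> a n \<le> g n + Wc * (a (n - m) + 1)"
    and base: "\<And>n. n < m \<Longrightarrow> a n \<le> g n + Wc"
    and g: "\<And>n. g n \<le> C * exp (\<rho> * n)"
    and Wc: "0 \<le> Wc" "Wc \<le> exp (\<rho> * m)"
    and rho: "0 \<le> \<rho>" and C: "0 \<le> C"
  shows "a n \<le> (C + 1 + exp (\<rho> * m)) * (n + 1) * exp (\<rho> * n)"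
proof (induction n rule: less_induct)
  case (less n)
  define K where "K = C + 1 + exp (\<rho> * m)"
  define e where "e = exp (\<rho> * n)"
  have e1: "1 \<le> e" unfolding e_def using rho by simp
  have K0: "0 \<le> K" unfolding K_def using C by (simp add: add_nonneg_nonneg)
  show ?case
  proof (cases "n < m")
    case True
    have "a n \<le> C * e + exp (\<rho> * m)" using base[OF True] g[of n] Wc unfolding e_def by linarith
    also have "\<dots> \<le> K * (n+1) * e"
    proof -
      have "C * e \<le> C * ((n+1) * e)" using C e1 by (intro mult_left_mono) auto
      moreover have "exp (\<rho> * m) \<le> exp (\<rho> * m) * ((n+1) * e)"
        using e1 by (simp add: mult_le_cancel_left1) (smt (verit) e1 mult_le_cancel_left1 of_nat_0_le_iff)
      moreover have "K * (n+1) * e = C * ((n+1) * e) + (n+1) * e + exp (\<rho> * m) * ((n+1) * e)"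
        unfolding K_def by (simp add: algebra_simps)
      moreover have "0 \<le> (n+1) * e" using e1 by simp
      ultimately show ?thesis by linarith
    qed
    finally show ?thesis unfolding K_def e_def by (simp add: add.commute)
  next
    case False
    then have nm: "n \<ge> m" by simp
    define e' where "e' = exp (\<rho> * (n - m))"
    have ee: "exp (\<rho> * m) * e' = e" unfolding e'_def e_def using nm
      by (simp add: exp_add[symmetric] algebra_simps of_nat_diff)
    have IH: "a (n - m) \<le> K * (n - m + 1) * e'"
      using less.IH[of "n - m"] m nm unfolding K_def e'_def by (simp add: of_nat_diff add.commute)
    have "Wc * (a (n - m) + 1) \<le> exp (\<rho> * m) * (K * (n - m + 1) * e' + 1)"
      using Wc IH a0[of "n-m"] by (intro mult_mono) auto
    also have "\<dots> = K * (n - m + 1) * e + exp (\<rho> * m)"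
      using ee by (simp add: algebra_simps)
    finally have A: "a n \<le> C * e + K * (n - m + 1) * e + exp (\<rho> * m)"
      using step[OF nm] g[of n] unfolding e_def by linarith
    have em: "exp (\<rho> * m) \<le> e" unfolding e_def using rho nm by (simp add: mult_left_mono)
    have "K * e \<le> K * m * e"
      using K0 e1 m by (simp add: mult_le_cancel_left1 mult.assoc mult_left_mono mult_right_mono)
    moreover have "K * e = C * e + e + exp (\<rho> * m) * e" unfolding K_def by (simp add: algebra_simps)
    moreover have "exp (\<rho> * m) \<le> exp (\<rho> * m) * e" using e1 by simp
    moreover have "K * (n + 1) * e = K * (n - m + 1) * e + K * m * e"
      using nm by (simp add: algebra_simps of_nat_diff)
    ultimately have "a n \<le> K * (n + 1) * e" using A em e1 by linarith
    then show ?thesis unfolding K_def e_def by (simp add: add.commute)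
  qed
qed



locale pdyn =
  fixes T :: "'a topology" and f :: "'a \<Rightarrow> 'a" and I :: "'a set" and p :: "'a \<Rightarrow> nat" and k :: nat
  assumes cs: "compact_space T"
    and Iopen: "openin T I" and Iclosed: "closedin T I"
    and fcont: "continuous_map (subtopology T (topspace T - I)) T f"
    and pk: "\<And>x. p x < k"
    and popen: "\<And>i. openin T {x \<in> topspace T. p x = i}"
    and scat: "\<And>Y. closedin T Y \<Longrightarrow> Y \<noteq> {} \<Longrightarrow> \<exists>y V. openin T V \<and> V \<inter> Y = {y}"
begin

abbreviation "X \<equiv> topspace T"
abbreviation "it \<equiv> itin p f I"

definition NN :: "nat \<Rightarrow> 'a set \<Rightarrow> nat" where
  "NN n S = card (it n ` S)"

definition small :: "real \<Rightarrow> 'a set \<Rightarrow> bool" where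
  "small \<rho> S \<longleftrightarrow> (\<exists>C. \<forall>n. real (NN n S) \<le> C * exp (\<rho> * n))"

definition WS :: "nat \<Rightarrow> nat option list set" where
  "WS n = {w. set w \<subseteq> insert None (Some ` {..<k}) \<and> length w = n}"

lemma finite_WS: "finite (WS n)"
  unfolding WS_def by (rule finite_lists_length_eq) auto

lemma it_WS: "it n x \<in> WS n"
  unfolding WS_def
proof (induction n arbitrary: x)
  case 0 then show ?case by simp
next
  case (Suc n) then show ?case using pk by auto
qed

lemma finite_img: "finite (it n ` S)"
  by (rule finite_subset[OF _ finite_WS[of n]]) (auto simp: it_WS)

lemma fX: "x \<in> X \<Longrightarrow> x \<notin> I \<Longrightarrow> f x \<in> X"
  using fcont unfolding continuous_map_def by auto

lemma IX: "I \<subseteq> X" using Iclosed closedin_subset by auto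

lemma open_level: "openin T {x \<in> X. it n x = w}"
proof (induction n arbitrary: w)
  case 0 then show ?case by (cases w) auto
next
  case (Suc n)
  show ?case
  proof (cases w)
    case Nil then show ?thesis by simp
  next
    case (Cons a w')
    have A: "openin T {x \<in> X. Some (p x) = a}"
    proof (cases a)
      case None then show ?thesis by simp
    next
      case (Some i) then show ?thesis using popen[of i] by simp
    qed
    have XI: "openin T (X - I)" using Iclosed by (simp add: openin_diff)
    have "openin (subtopology T (X - I)) {x \<in> topspace (subtopology T (X - I)). f x \<in> {y \<in> X. it n y = w'}}"
      by (rule openin_continuous_map_preimage[OF fcont Suc.IH])
    then have B: "openin T {x \<in> X - I. f x \<in> {y \<in> X. it n y = w'}}"
      using openin_trans_full[OF _ XI] by (simp add: Int_absorb1)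
    have C: "openin T {x \<in> I. replicate n None = w'}"
      by (cases "replicate n None = w'") (auto simp: Iopen)
    have eq: "{x \<in> X. it (Suc n) x = w} = {x \<in> X. Some (p x) = a} \<inter>
        ({x \<in> I. replicate n None = w'} \<union> {x \<in> X - I. f x \<in> {y \<in> X. it n y = w'}})"
      using Cons IX fX by auto
    show ?thesis unfolding eq using A B C by (intro openin_Int openin_Un) auto
  qed
qed

lemma open_levels: "openin T {x \<in> X. it n x \<in> W}"
proof -
  have "{x \<in> X. it n x \<in> W} = (\<Union>w\<in>W. {x \<in> X. it n x = w})" by auto
  then show ?thesis using open_level by (auto intro!: openin_Union)
qed

lemma NN_mono: "S \<subseteq> S' \<Longrightarrow> NN n S \<le> NN n S'"
  unfolding NN_def by (intro card_mono finite_img image_mono)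

lemma NN_Un: "NN n (A \<union> B) \<le> NN n A + NN n B"
  unfolding NN_def by (simp add: image_Un card_Un_le)

lemma small_C0: "small \<rho> S \<Longrightarrow> \<exists>C\<ge>0. \<forall>n. real (NN n S) \<le> C * exp (\<rho> * n)"
  unfolding small_def
proof (elim exE)
  fix C assume h: "\<forall>n. real (NN n S) \<le> C * exp (\<rho> * real n)"
  have "0 \<le> C" using h[rule_format, of 0] by simp
  with h show "\<exists>C\<ge>0. \<forall>n. real (NN n S) \<le> C * exp (\<rho> * real n)" by blast
qed

lemma small_subset: "small \<rho> S' \<Longrightarrow> S \<subseteq> S' \<Longrightarrow> small \<rho> S"
  unfolding small_def using NN_mono by (meson of_nat_le_iff order_trans)

lemma small_rate: "small \<rho> S \<Longrightarrow> \<rho> \<le> \<rho>' \<Longrightarrow> small \<rho>' S"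
proof -
  assume "small \<rho> S" "\<rho> \<le> \<rho>'"
  then obtain C where C: "C \<ge> 0" "\<forall>n. real (NN n S) \<le> C * exp (\<rho> * n)" using small_C0 by blast
  have "C * exp (\<rho> * n) \<le> C * exp (\<rho>' * n)" for n :: nat
    using C(1) \<open>\<rho> \<le> \<rho>'\<close> by (auto intro!: mult_left_mono mult_right_mono)
  then show ?thesis unfolding small_def using C(2) by (meson order_trans)
qed

lemma small_Un: "small \<rho> A \<Longrightarrow> small \<rho> B \<Longrightarrow> small \<rho> (A \<union> B)"
proof -
  assume "small \<rho> A" "small \<rho> B"
  then obtain C D where C: "\<forall>n. real (NN n A) \<le> C * exp (\<rho> * n)" and D: "\<forall>n. real (NN n B) \<le> D * exp (\<rho> * n)"
    unfolding small_def by blast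
  have "real (NN n (A \<union> B)) \<le> (C + D) * exp (\<rho> * n)" for n
    using NN_Un[of n A B] C[rule_format, of n] D[rule_format, of n] by (simp add: algebra_simps)
  then show ?thesis unfolding small_def by blast
qed

lemma small_empty: "small \<rho> {}"
  unfolding small_def NN_def by (rule exI[of _ 0]) simp

lemma small_Union: "finite \<V> \<Longrightarrow> (\<And>V. V \<in> \<V> \<Longrightarrow> small \<rho> V) \<Longrightarrow> small \<rho> (\<Union>\<V>)"
  by (induction rule: finite_induct) (auto intro: small_Un small_empty)

lemma small_single: "0 \<le> \<rho> \<Longrightarrow> small \<rho> {y}"
proof -
  assume r: "0 \<le> \<rho>"
  have "real (NN n {y}) \<le> 1 * exp (\<rho> * n)" for n
    unfolding NN_def using r by simp
  then show ?thesis unfolding small_def by blast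
qed

lemma poly_exp: "0 < \<eta> \<Longrightarrow> real n + 1 \<le> (1 + 1/\<eta>) * exp (\<eta> * n)"
proof -
  assume e: "0 < \<eta>"
  have "1 + \<eta> * n \<le> exp (\<eta> * n)" by (rule exp_ge_add_one_self)
  then have "(1/\<eta>) * (1 + \<eta> * n) \<le> (1/\<eta>) * exp (\<eta> * n)" using e by (intro mult_left_mono) auto
  then have "1/\<eta> + n \<le> (1/\<eta>) * exp (\<eta> * n)" using e by (simp add: algebra_simps)
  moreover have "1 \<le> exp (\<eta> * n)" using e by simp
  moreover have "0 < 1/\<eta>" using e by simp
  moreover have "(1 + 1/\<eta>) * exp (\<eta> * n) = exp (\<eta> * n) + (1/\<eta>) * exp (\<eta> * n)" by (simp add: algebra_simps)
  ultimately show ?thesis by linarith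
qed

lemma small_poly:
  assumes "\<forall>n. real (NN n S) \<le> K * (n + 1) * exp (\<rho> * n)" "0 < \<eta>" "0 \<le> K"
  shows "small (\<rho> + \<eta>) S"
proof -
  have "real (NN n S) \<le> (K * (1 + 1/\<eta>)) * exp ((\<rho> + \<eta>) * n)" for n
  proof -
    have "K * (real n + 1) * exp (\<rho> * n) \<le> K * ((1 + 1/\<eta>) * exp (\<eta> * n)) * exp (\<rho> * n)"
      using poly_exp[OF assms(2), of n] assms(3) by (intro mult_right_mono mult_left_mono) auto
    also have "\<dots> = (K * (1 + 1/\<eta>)) * exp ((\<rho> + \<eta>) * n)"
      by (simp add: algebra_simps exp_add)
    finally show ?thesis using assms(1)[rule_format, of n] by linarith
  qed
  then show ?thesis unfolding small_def by blast
qed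

lemma count_main:
  assumes fwd: "\<forall>y\<in>Y. y \<notin> I \<longrightarrow> f y \<in> Y"
    and m: "m \<ge> 1"
    and cover: "Y \<subseteq> G \<union> {y. it m y \<in> W}"
    and W: "W \<subseteq> WS m" "real (card W) \<le> exp (\<delta> * m)" "0 \<le> \<delta>"
    and G: "small \<epsilon> G" "0 \<le> \<epsilon>"
    and eta: "0 < \<eta>"
  shows "small (max \<delta> \<epsilon> + \<eta>) Y"
proof -
  define \<rho> where "\<rho> = max \<delta> \<epsilon>"
  obtain C where C: "C \<ge> 0" "\<forall>n. real (NN n G) \<le> C * exp (\<epsilon> * n)" using small_C0[OF G(1)] by blast
  have finW: "finite W" using W(1) finite_WS finite_subset by blast
  have step: "NN n Y \<le> NN n G + card W * (NN (n - m) Y + 1)" if "n \<ge> m" for n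
  proof -
    obtain j where j: "n = m + j" using \<open>n \<ge> m\<close> le_Suc_ex by blast
    have "it n ` Y \<subseteq> it n ` G \<union> (\<lambda>(u, v). u @ v) ` (W \<times> insert (replicate j None) (it j ` Y))"
    proof
      fix w assume "w \<in> it n ` Y"
      then obtain y where y: "y \<in> Y" "w = it n y" by blast
      show "w \<in> it n ` G \<union> (\<lambda>(u, v). u @ v) ` (W \<times> insert (replicate j None) (it j ` Y))"
      proof (cases "y \<in> G")
        case True then show ?thesis using y by blast
      next
        case False
        then have yW: "it m y \<in> W" using cover y by blast
        from itin_add[OF fwd y(1), of p m j] show ?thesis
        proof
          assume "\<exists>z\<in>Y. it (m + j) y = it m y @ it j z"
          then obtain z where "z \<in> Y" "it (m + j) y = it m y @ it j z" by blast
          then show ?thesis using y yW j by (auto intro!: image_eqI[where x="(it m y, it j z)"])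
        next
          assume "it (m + j) y = it m y @ replicate j None"
          then show ?thesis using y yW j by (auto intro!: image_eqI[where x="(it m y, replicate j None)"])
        qed
      qed
    qed
    then have "NN n Y \<le> card (it n ` G \<union> (\<lambda>(u, v). u @ v) ` (W \<times> insert (replicate j None) (it j ` Y)))"
      unfolding NN_def by (intro card_mono) (auto intro!: finite_img finite_imageI finW)
    also have "\<dots> \<le> NN n G + card ((\<lambda>(u, v). u @ v) ` (W \<times> insert (replicate j None) (it j ` Y)))"
      unfolding NN_def by (rule card_Un_le)
    also have "card ((\<lambda>(u, v). u @ v) ` (W \<times> insert (replicate j None) (it j ` Y))) \<le> card (W \<times> insert (replicate j None) (it j ` Y))"
      by (rule card_image_le) (auto intro!: finite_img finW)
    also have "card (W \<times> insert (replicate j None) (it j ` Y)) \<le> card W * (NN j Y + 1)"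
    proof -
      have "card (insert (replicate j None) (it j ` Y)) \<le> NN j Y + 1"
        unfolding NN_def using card_insert_le_m1 by (simp add: card_insert_if finite_img)
      then have "card W * card (insert (replicate j None) (it j ` Y)) \<le> card W * (NN j Y + 1)"
        by (rule mult_le_mono2)
      then show ?thesis by (simp only: card_cartesian_product)
    qed
    finally show ?thesis using j by simp
  qed
  have base: "NN n Y \<le> NN n G + card W" if "n < m" for n
  proof -
    have "it n ` Y \<subseteq> it n ` G \<union> take n ` W"
    proof
      fix w assume "w \<in> it n ` Y"
      then obtain y where y: "y \<in> Y" "w = it n y" by blast
      show "w \<in> it n ` G \<union> take n ` W"
      proof (cases "y \<in> G")
        case True then show ?thesis using y by blast
      next
        case False
        then have yW: "it m y \<in> W" using cover y by blast
        have "it n y = take n (it m y)" using take_itin[of n m p f I y] \<open>n < m\<close> by simp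
        then show ?thesis using y yW by blast
      qed
    qed
    then have "NN n Y \<le> card (it n ` G \<union> take n ` W)"
      unfolding NN_def by (intro card_mono) (auto intro!: finite_img finite_imageI finW)
    also have "\<dots> \<le> NN n G + card (take n ` W)" unfolding NN_def by (rule card_Un_le)
    also have "card (take n ` W) \<le> card W" by (rule card_image_le[OF finW])
    finally show ?thesis by simp
  qed
  have rho0: "0 \<le> \<rho>" unfolding \<rho>_def using W(3) by simp
  have Wr: "real (card W) \<le> exp (\<rho> * m)"
    using W(2) unfolding \<rho>_def by (smt (verit, ccfv_SIG) exp_le_cancel_iff max.cobounded1 mult_right_mono of_nat_0_le_iff)
  have g: "real (NN n G) \<le> C * exp (\<rho> * n)" for n
  proof -
    have "C * exp (\<epsilon> * n) \<le> C * exp (\<rho> * n)" unfolding \<rho>_def using C(1)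
      by (intro mult_left_mono) (auto intro: mult_right_mono)
    then show ?thesis using C(2)[rule_format, of n] by linarith
  qed
  have bnd: "real (NN n Y) \<le> (C + 1 + exp (\<rho> * m)) * (real n + 1) * exp (\<rho> * n)" for n
  proof (rule real_bound_rec[where a="\<lambda>n. real (NN n Y)" and g="\<lambda>n. real (NN n G)" and Wc="real (card W)", OF m])
    show "\<And>n. m \<le> n \<Longrightarrow> real (NN n Y) \<le> real (NN n G) + real (card W) * (real (NN (n - m) Y) + 1)"
    proof -
      fix n assume "m \<le> n"
      from step[OF this] have "real (NN n Y) \<le> real (NN n G + card W * (NN (n - m) Y + 1))" by (simp only: of_nat_le_iff)
      then show "real (NN n Y) \<le> real (NN n G) + real (card W) * (real (NN (n - m) Y) + 1)" by (simp add: algebra_simps)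
    qed
    show "\<And>n. n < m \<Longrightarrow> real (NN n Y) \<le> real (NN n G) + real (card W)"
    proof -
      fix n assume "n < m"
      from base[OF this] have "real (NN n Y) \<le> real (NN n G + card W)" by (simp only: of_nat_le_iff)
      then show "real (NN n Y) \<le> real (NN n G) + real (card W)" by simp
    qed
  qed (use g Wr rho0 C in \<open>simp_all\<close>)
  show ?thesis
    using small_poly[OF _ eta, of Y "C + 1 + exp (\<rho> * m)" \<rho>] bnd C(1) unfolding \<rho>_def
    by (simp add: add_nonneg_nonneg)
qed

end


lemma finite_chain_min:
  assumes "finite \<A>" "\<A> \<noteq> {}" "\<forall>A\<in>\<A>. \<forall>B\<in>\<A>. A \<subseteq> B \<or> B \<subseteq> A"
  shows "\<exists>A\<in>\<A>. \<forall>B\<in>\<A>. A \<subseteq> B"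
  using assms
proof (induction rule: finite_ne_induct)
  case (singleton x) then show ?case by auto
next
  case (insert x F)
  then obtain A where A: "A \<in> F" "\<forall>B\<in>F. A \<subseteq> B" by auto
  show ?case
  proof (cases "x \<subseteq> A")
    case True then show ?thesis using A by auto
  next
    case False then have "A \<subseteq> x" using insert.prems A by auto
    then show ?thesis using A by auto
  qed
qed

lemma Zorn_min:
  assumes sub: "\<F> \<subseteq> Pow S" and ne: "\<F> \<noteq> {}"
    and ch: "\<And>\<C>. \<C> \<noteq> {} \<Longrightarrow> \<C> \<subseteq> \<F> \<Longrightarrow> (\<forall>A\<in>\<C>. \<forall>B\<in>\<C>. A \<subseteq> B \<or> B \<subseteq> A) \<Longrightarrow> \<Inter>\<C> \<in> \<F>"
  shows "\<exists>M\<in>\<F>. \<forall>Y\<in>\<F>. Y \<subseteq> M \<longrightarrow> Y = M"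
proof -
  define A where "A = (\<lambda>Y. S - Y) ` \<F>"
  have "\<exists>M\<in>A. \<forall>Z\<in>A. M \<subseteq> Z \<longrightarrow> Z = M"
  proof (rule Zorn_Lemma2, rule ballI)
    fix C assume C: "C \<in> chains A"
    show "\<exists>U\<in>A. \<forall>X\<in>C. X \<subseteq> U"
    proof (cases "C = {}")
      case True then show ?thesis using ne unfolding A_def by auto
    next
      case False
      define \<C> where "\<C> = (\<lambda>Z. S - Z) ` C"
      have CA: "C \<subseteq> A" using C unfolding chains_def by auto
      have CF: "\<C> \<subseteq> \<F>"
      proof
        fix Y assume "Y \<in> \<C>"
        then obtain Z where "Z \<in> C" "Y = S - Z" unfolding \<C>_def by auto
        then obtain Y' where "Y' \<in> \<F>" "Z = S - Y'" using CA unfolding A_def by auto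
        then have "Y = Y'" using \<open>Y = S - Z\<close> sub by auto
        then show "Y \<in> \<F>" using \<open>Y' \<in> \<F>\<close> by simp
      qed
      have chC: "\<forall>A\<in>\<C>. \<forall>B\<in>\<C>. A \<subseteq> B \<or> B \<subseteq> A"
        using C unfolding chains_def chain_subset_def \<C>_def by blast
      have I: "\<Inter>\<C> \<in> \<F>" using ch[OF _ CF chC] False unfolding \<C>_def by auto
      show ?thesis
      proof (rule bexI[of _ "S - \<Inter>\<C>"])
        show "S - \<Inter>\<C> \<in> A" using I unfolding A_def by auto
        show "\<forall>X\<in>C. X \<subseteq> S - \<Inter>\<C>"
        proof
          fix Z assume "Z \<in> C"
          then obtain Y' where "Y' \<in> \<F>" "Z = S - Y'" using CA unfolding A_def by auto
          then have "S - Z \<in> \<C>" using \<open>Z \<in> C\<close> unfolding \<C>_def by auto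
          then have "\<Inter>\<C> \<subseteq> S - Z" by auto
          then show "Z \<subseteq> S - \<Inter>\<C>" using \<open>Z = S - Y'\<close> by auto
        qed
      qed
    qed
  qed
  then obtain M where M: "M \<in> A" "\<forall>Z\<in>A. M \<subseteq> Z \<longrightarrow> Z = M" by blast
  then obtain Y0 where Y0: "Y0 \<in> \<F>" "M = S - Y0" unfolding A_def by auto
  show ?thesis
  proof (rule bexI[OF _ Y0(1)], intro ballI impI)
    fix Y assume "Y \<in> \<F>" "Y \<subseteq> Y0"
    then have "S - Y \<in> A" "M \<subseteq> S - Y" using Y0 unfolding A_def by auto
    then have "S - Y = S - Y0" using M Y0 by auto
    then show "Y = Y0" using sub \<open>Y \<in> \<F>\<close> Y0(1) by auto
  qed
qed

lemma delta_lemma: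
  fixes m :: nat and c :: real
  assumes "real N < exp (c * real m)" "m \<ge> 1" "c > 0"
  shows "\<exists>\<delta>. 0 \<le> \<delta> \<and> \<delta> < c \<and> real N \<le> exp (\<delta> * real m)"
proof -
  define M where "M = max 1 (real N)"
  have M1: "1 \<le> M" unfolding M_def by simp
  have Mlt: "M < exp (c * m)"
    unfolding M_def using assms by (auto simp: max_def)
  define \<delta> where "\<delta> = ln M / m"
  have mpos: "real m > 0" using assms by simp
  have "exp (\<delta> * m) = M" unfolding \<delta>_def using mpos M1 by simp
  moreover have "\<delta> < c"
  proof -
    have "ln M < ln (exp (c * m))" using Mlt M1 by (subst ln_less_cancel_iff) auto
    then have "ln M < c * m" by simp
    then show ?thesis unfolding \<delta>_def using mpos by (simp add: divide_less_eq)
  qed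
  moreover have "0 \<le> \<delta>" unfolding \<delta>_def using M1 mpos by simp
  ultimately show ?thesis unfolding M_def by (intro exI[of _ \<delta>]) auto
qed

context pdyn begin

definition fwdinv :: "'a set \<Rightarrow> bool" where
  "fwdinv Y \<longleftrightarrow> (\<forall>y\<in>Y. y \<notin> I \<longrightarrow> f y \<in> Y)"

definition FF :: "real \<Rightarrow> 'a set set" where
  "FF c = {Y. closedin T Y \<and> fwdinv Y \<and> (\<forall>m. exp (c * m) \<le> real (NN m Y))}"

lemma notsmall:
  assumes "Y \<in> FF c" "\<rho> < c" shows "\<not> small \<rho> Y"
proof
  assume "small \<rho> Y"
  then obtain C where C: "C \<ge> 0" "\<forall>n. real (NN n Y) \<le> C * exp (\<rho> * n)" using small_C0 by blast
  obtain n :: nat where n: "C / (c - \<rho>) < n" using reals_Archimedean2 by blast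
  have "exp (c * n) \<le> real (NN n Y)" using assms(1) unfolding FF_def by auto
  then have "exp (c * n) \<le> C * exp (\<rho> * n)" using C(2)[rule_format, of n] by linarith
  then have "exp (c * n) / exp (\<rho> * n) \<le> C" by (simp add: divide_le_eq)
  then have "exp ((c - \<rho>) * n) \<le> C" by (simp add: exp_diff algebra_simps)
  moreover have "1 + (c - \<rho>) * n \<le> exp ((c - \<rho>) * n)" by (rule exp_ge_add_one_self)
  moreover have "C < (c - \<rho>) * n" using n assms(2) by (simp add: divide_less_eq mult.commute)
  ultimately show False by linarith
qed

lemma closed_level: "closedin T {x \<in> X. it n x = w}"
proof -
  have "X - {x \<in> X. it n x = w} = {x \<in> X. it n x \<in> - {w}}" by auto
  then show ?thesis using open_levels[of n "- {w}"] unfolding closedin_def by auto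
qed

lemma chain_inter:
  assumes ne: "\<C> \<noteq> {}" and sub: "\<C> \<subseteq> FF c" and ch: "\<forall>A\<in>\<C>. \<forall>B\<in>\<C>. A \<subseteq> B \<or> B \<subseteq> A"
  shows "\<Inter>\<C> \<in> FF c"
proof -
  have cl: "closedin T (\<Inter>\<C>)" using sub ne unfolding FF_def by auto
  have fw: "fwdinv (\<Inter>\<C>)" using sub unfolding FF_def fwdinv_def by auto
  have "exp (c * m) \<le> real (NN m (\<Inter>\<C>))" for m
  proof -
    obtain Y0 where Y0: "Y0 \<in> \<C>" "\<forall>Y\<in>\<C>. NN m Y0 \<le> NN m Y"
      using ex_has_least_nat[of "\<lambda>Y. Y \<in> \<C>" _ "NN m"] ne by blast
    have "it m ` Y0 \<subseteq> it m ` (\<Inter>\<C>)"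
    proof
      fix w assume w: "w \<in> it m ` Y0"
      have inY: "w \<in> it m ` Y" if "Y \<in> \<C>" for Y
      proof (cases "Y0 \<subseteq> Y")
        case True then show ?thesis using w by blast
      next
        case False
        then have "Y \<subseteq> Y0" using ch Y0(1) that by blast
        then have "it m ` Y \<subseteq> it m ` Y0" by blast
        moreover have "card (it m ` Y0) \<le> card (it m ` Y)" using Y0(2) that unfolding NN_def by auto
        ultimately have "it m ` Y = it m ` Y0" using card_subset_eq finite_img
          by (metis antisym card_mono)
        then show ?thesis using w by simp
      qed
      define L where "L = {x \<in> X. it m x = w}"
      have XC: "\<forall>Y\<in>\<C>. Y \<subseteq> X" using sub unfolding FF_def by (auto dest: closedin_subset)
      have "compactin T X" using cs unfolding compact_space_def .
      then have fip: "\<And>\<U>. (\<forall>C\<in>\<U>. closedin T C) \<and> (\<forall>\<F>. finite \<F> \<and> \<F> \<subseteq> \<U> \<longrightarrow> X \<inter> \<Inter>\<F> \<noteq> {}) \<Longrightarrow> X \<inter> \<Inter>\<U> \<noteq> {}"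
        unfolding compactin_fip by blast
      have "X \<inter> \<Inter>((\<lambda>Y. Y \<inter> L) ` \<C>) \<noteq> {}"
      proof (rule fip, intro conjI allI impI ballI)
        fix C assume "C \<in> (\<lambda>Y. Y \<inter> L) ` \<C>"
        then show "closedin T C" using sub closed_level unfolding FF_def L_def by auto
      next
        fix \<F> assume F: "finite \<F> \<and> \<F> \<subseteq> (\<lambda>Y. Y \<inter> L) ` \<C>"
        then obtain \<C>' where C': "\<C>' \<subseteq> \<C>" "finite \<C>'" "\<F> = (\<lambda>Y. Y \<inter> L) ` \<C>'"
          by (meson finite_subset_image)
        show "X \<inter> \<Inter>\<F> \<noteq> {}"
        proof (cases "\<C>' = {}")
          case True
          then show ?thesis using C' w Y0(1) XC by auto
        next
          case False
          obtain A where A: "A \<in> \<C>'" "\<forall>B\<in>\<C>'. A \<subseteq> B"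
            using finite_chain_min[OF C'(2) False] ch C'(1) by (meson subset_iff)
          obtain y where y: "y \<in> A" "it m y = w" using inY[of A] A(1) C'(1) by auto
          have "y \<in> X" using XC A(1) C'(1) y by auto
          then have "y \<in> X \<inter> \<Inter>\<F>" using A y C'(3) unfolding L_def by auto
          then show ?thesis by blast
        qed
      qed
      then obtain y where "y \<in> X" "\<forall>Y\<in>\<C>. y \<in> Y \<inter> L" by blast
      then have "y \<in> \<Inter>\<C>" "it m y = w" using ne unfolding L_def by auto
      then show "w \<in> it m ` (\<Inter>\<C>)" by blast
    qed
    then have "NN m Y0 \<le> NN m (\<Inter>\<C>)" unfolding NN_def by (intro card_mono finite_img)
    moreover have "exp (c * m) \<le> real (NN m Y0)" using sub Y0(1) unfolding FF_def by auto
    ultimately show ?thesis by linarith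
  qed
  then show ?thesis using cl fw unfolding FF_def by auto
qed

end


context pdyn begin

lemma small_pre:
  assumes S': "small \<rho> S'" and r: "0 \<le> \<rho>" and S: "\<forall>x\<in>S. x \<notin> I \<and> f x \<in> S'"
  shows "small \<rho> S"
proof -
  obtain C where C: "C \<ge> 0" "\<forall>n. real (NN n S') \<le> C * exp (\<rho> * n)" using small_C0[OF S'] by blast
  have "real (NN n S) \<le> (1 + k * C) * exp (\<rho> * n)" for n
  proof (cases n)
    case 0
    have "NN 0 S \<le> 1" unfolding NN_def
      by (rule order_trans[OF card_mono[of "{[]}"]]) auto
    moreover have "0 \<le> real k * C" using C(1) by simp
    then have "1 \<le> (1 + k * C) * exp (\<rho> * n)" using 0 by simp
    ultimately show ?thesis using 0 by simp
  next
    case (Suc m)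
    have "it (Suc m) ` S \<subseteq> (\<lambda>(a, w). Some a # w) ` ({..<k} \<times> it m ` S')"
    proof
      fix w assume "w \<in> it (Suc m) ` S"
      then obtain x where x: "x \<in> S" "w = it (Suc m) x" by blast
      then have "w = Some (p x) # it m (f x)" using S by auto
      then show "w \<in> (\<lambda>(a, w). Some a # w) ` ({..<k} \<times> it m ` S')"
        using x S pk by (auto intro!: image_eqI[where x="(p x, it m (f x))"])
    qed
    then have "NN (Suc m) S \<le> card ((\<lambda>(a, w). Some a # w) ` ({..<k} \<times> it m ` S'))"
      unfolding NN_def by (intro card_mono) (auto intro!: finite_imageI finite_img)
    also have "\<dots> \<le> card ({..<k} \<times> it m ` S')" by (rule card_image_le) (auto intro!: finite_img)
    also have "\<dots> = k * NN m S'" by (simp add: card_cartesian_product NN_def)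
    finally have A: "real (NN (Suc m) S) \<le> real k * real (NN m S')" by (metis of_nat_le_iff of_nat_mult)
    have "real k * real (NN m S') \<le> real k * (C * exp (\<rho> * m))" using C(2) by (intro mult_left_mono) auto
    also have "\<dots> \<le> real k * (C * exp (\<rho> * Suc m))" using C(1) r by (intro mult_left_mono) (auto intro!: mult_left_mono)
    also have "\<dots> \<le> (1 + k * C) * exp (\<rho> * Suc m)" by (simp add: algebra_simps)
    finally show ?thesis using A Suc by simp
  qed
  then show ?thesis unfolding small_def by blast
qed

lemma all_small:
  assumes e0: "\<epsilon>0 > 0" shows "small \<epsilon>0 X"
proof (rule ccontr)
  assume ns: "\<not> small \<epsilon>0 X"
  define c where "c = \<epsilon>0 / 2"
  have c0: "c > 0" unfolding c_def using e0 by simp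
  have Xne: "X \<noteq> {}" using ns small_empty by auto
  have NN0: "NN 0 S = (if S = {} then 0 else 1)" for S unfolding NN_def
    by (auto simp: image_constant_conv)
  have XF: "X \<in> FF c"
  proof -
    have fw: "fwdinv X" using fX unfolding fwdinv_def by auto
    have "exp (c * m) \<le> real (NN m X)" for m
    proof (rule ccontr)
      assume "\<not> ?thesis" then have lt: "real (NN m X) < exp (c * m)" by simp
      have m1: "m \<ge> 1"
      proof (rule ccontr)
        assume "\<not> m \<ge> 1" then have "m = 0" by simp
        with lt NN0[of X] Xne show False by simp
      qed
      have "small (max c 0 + c / 2) X"
      proof (rule count_main[where G="{}" and W="it m ` X"])
        show "\<forall>y\<in>X. y \<notin> I \<longrightarrow> f y \<in> X" using fw unfolding fwdinv_def .
        show "real (card (it m ` X)) \<le> exp (c * m)" using lt unfolding NN_def by simp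
      qed (use m1 c0 it_WS small_empty in auto)
      then have "small \<epsilon>0 X" by (rule small_rate) (use c0 in \<open>simp add: c_def\<close>)
      with ns show False by simp
    qed
    then show ?thesis unfolding FF_def using fw by auto
  qed
  have subF: "FF c \<subseteq> Pow X" unfolding FF_def by (auto dest: closedin_subset)
  obtain Y where Y: "Y \<in> FF c" and Ymin: "\<forall>Y'\<in>FF c. Y' \<subseteq> Y \<longrightarrow> Y' = Y"
    using Zorn_min[OF subF _ chain_inter] XF by blast
  have Ycl: "closedin T Y" and Yfw: "fwdinv Y" and Ycnt: "\<forall>m. exp (c * m) \<le> real (NN m Y)"
    using Y unfolding FF_def by auto
  have YX: "Y \<subseteq> X" using Ycl closedin_subset by auto
  define \<epsilon> where "\<epsilon> = c / 2"
  have eps: "0 < \<epsilon>" "\<epsilon> < c" unfolding \<epsilon>_def using c0 by auto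
  define Y2 where "Y2 = {y \<in> Y. \<forall>V. openin T V \<and> y \<in> V \<longrightarrow> \<not> small \<epsilon> (V \<inter> Y)}"
  have Y2Y: "Y2 \<subseteq> Y" unfolding Y2_def by auto
  have Y2cl: "closedin T Y2"
    unfolding closedin_def
  proof
    show "Y2 \<subseteq> X" using Y2Y YX by auto
    show "openin T (X - Y2)"
    proof (subst openin_subopen, intro ballI)
      fix x assume x: "x \<in> X - Y2"
      show "\<exists>U. openin T U \<and> x \<in> U \<and> U \<subseteq> X - Y2"
      proof (cases "x \<in> Y")
        case False
        then show ?thesis using x Ycl Y2Y unfolding closedin_def by (intro exI[of _ "X - Y"]) auto
      next
        case True
        then obtain V where V: "openin T V" "x \<in> V" "small \<epsilon> (V \<inter> Y)" using x unfolding Y2_def by auto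
        have "V \<subseteq> X - Y2" using V openin_subset[OF V(1)] unfolding Y2_def by auto
        then show ?thesis using V by blast
      qed
    qed
  qed
  have Y2fw: "fwdinv Y2"
    unfolding fwdinv_def
  proof (intro ballI impI)
    fix y assume y: "y \<in> Y2" "y \<notin> I"
    have fyY: "f y \<in> Y" using Yfw y Y2Y unfolding fwdinv_def by auto
    show "f y \<in> Y2"
    proof (rule ccontr)
      assume "f y \<notin> Y2"
      then obtain W where W: "openin T W" "f y \<in> W" "small \<epsilon> (W \<inter> Y)" using fyY unfolding Y2_def by auto
      have XI: "openin T (X - I)" using Iclosed by (simp add: openin_diff)
      have "openin (subtopology T (X - I)) {x \<in> topspace (subtopology T (X - I)). f x \<in> W}"
        by (rule openin_continuous_map_preimage[OF fcont W(1)])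
      then have Vo: "openin T {x \<in> X - I. f x \<in> W}"
        using openin_trans_full[OF _ XI] by (simp add: Int_absorb1)
      have yV: "y \<in> {x \<in> X - I. f x \<in> W}" using y Y2Y YX W by auto
      have "small \<epsilon> ({x \<in> X - I. f x \<in> W} \<inter> Y)"
        by (rule small_pre[OF W(3)]) (use eps fyY Yfw in \<open>auto simp: fwdinv_def\<close>)
      then show False using y Vo yV unfolding Y2_def by blast
    qed
  qed
  have Y2F: "Y2 \<in> FF c"
  proof -
    have "exp (c * m) \<le> real (NN m Y2)" for m
    proof (rule ccontr)
      assume "\<not> ?thesis"
      then have "real (NN m Y2) < exp (c * m)" by simp
      then obtain m where m1: "m \<ge> 1" and lt: "real (NN m Y2) < exp (c * m)"
      proof (cases "m \<ge> 1")
        case True then show ?thesis using that \<open>real (NN m Y2) < exp (c * m)\<close> by blast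
      next
        case False
        then have "m = 0" by simp
        then have "Y2 = {}" using \<open>real (NN m Y2) < exp (c * m)\<close> NN0[of Y2] by (auto split: if_splits)
        then have "real (NN 1 Y2) < exp (c * real (1::nat))" using c0 unfolding NN_def by simp
        then show ?thesis using that[of 1] by simp
      qed
      obtain \<delta> where d: "0 \<le> \<delta>" "\<delta> < c" "real (NN m Y2) \<le> exp (\<delta> * m)"
        using delta_lemma[OF lt m1 c0] by blast
      define W where "W = it m ` Y2"
      define K where "K = Y \<inter> (X - {x \<in> X. it m x \<in> W})"
      have Kcl: "closedin T K" unfolding K_def
        using Ycl open_levels[of m W] by (intro closedin_Int closedin_diff) auto
      have Kc: "compactin T K" by (rule closedin_compact_space[OF cs Kcl])
      define \<U> where "\<U> = {V. openin T V \<and> small \<epsilon> (V \<inter> Y)}"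
      have KU: "K \<subseteq> \<Union>\<U>"
      proof
        fix y assume "y \<in> K"
        then have "y \<in> Y" "y \<notin> Y2" unfolding K_def W_def using YX by auto
        then show "y \<in> \<Union>\<U>" unfolding Y2_def \<U>_def by auto
      qed
      obtain \<V> where V: "finite \<V>" "\<V> \<subseteq> \<U>" "K \<subseteq> \<Union>\<V>"
        using Kc KU unfolding compactin_def \<U>_def by (metis (no_types, lifting) mem_Collect_eq)
      define G where "G = \<Union>((\<lambda>V. V \<inter> Y) ` \<V>)"
      have Gs: "small \<epsilon> G" unfolding G_def using V(1,2) unfolding \<U>_def
        by (intro small_Union) auto
      have cov: "Y \<subseteq> G \<union> {y. it m y \<in> W}"
      proof
        fix y assume y: "y \<in> Y"
        show "y \<in> G \<union> {y. it m y \<in> W}"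
        proof (cases "it m y \<in> W")
          case False then have "y \<in> K" unfolding K_def using y YX by auto
          then show ?thesis using V(3) y unfolding G_def by auto
        qed simp
      qed
      define \<eta> where "\<eta> = (c - max \<delta> \<epsilon>) / 2"
      have eta: "0 < \<eta>" unfolding \<eta>_def using d eps by simp
      have sm: "small (max \<delta> \<epsilon> + \<eta>) Y"
      proof (rule count_main[OF _ m1 cov _ _ d(1) Gs _ eta])
        show "\<forall>y\<in>Y. y \<notin> I \<longrightarrow> f y \<in> Y" using Yfw unfolding fwdinv_def .
        show "W \<subseteq> WS m" unfolding W_def using it_WS by auto
        show "real (card W) \<le> exp (\<delta> * m)" using d(3) unfolding W_def NN_def .
        show "0 \<le> \<epsilon>" using eps by simp
      qed
      have mc: "max \<delta> \<epsilon> < c" using d eps by simp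
      have "max \<delta> \<epsilon> + \<eta> < c" unfolding \<eta>_def using mc by (simp add: field_simps)
      then show False using notsmall[OF Y] sm by blast
    qed
    then show ?thesis unfolding FF_def using Y2cl Y2fw by auto
  qed
  have Y2eq: "Y2 = Y" using Ymin Y2F Y2Y by blast
  have Yne: "Y \<noteq> {}"
  proof
    assume "Y = {}"
    then show False using Ycnt[rule_format, of 0] NN0[of Y] by simp
  qed
  obtain y V where yV: "openin T V" "V \<inter> Y = {y}" using scat[OF Ycl Yne] by blast
  then have "y \<in> Y2" using Y2eq by auto
  moreover have "small \<epsilon> (V \<inter> Y)" using yV small_single eps by simp
  ultimately show False using yV unfolding Y2_def by blast
qed

end


definition down :: "'a topology \<Rightarrow> ('a \<Rightarrow> 'a \<Rightarrow> bool) \<Rightarrow> 'a set \<Rightarrow> 'a set" where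
  "down T le S = {w \<in> topspace T. \<exists>s\<in>S. le w s}"

lemma compact_clopen_cover:
  assumes "compactin T S"
    and cov: "\<forall>s\<in>S. \<exists>U. openin T U \<and> closedin T U \<and> s \<in> U \<and> w \<notin> U \<and> Q U"
    and Q0: "Q {}" and QU: "\<And>A B. Q A \<Longrightarrow> Q B \<Longrightarrow> Q (A \<union> B)"
  shows "\<exists>U. openin T U \<and> closedin T U \<and> S \<subseteq> U \<and> w \<notin> U \<and> Q U"
proof -
  define \<U> where "\<U> = {U. openin T U \<and> closedin T U \<and> w \<notin> U \<and> Q U}"
  have "S \<subseteq> \<Union>\<U>" using cov unfolding \<U>_def by blast
  then obtain \<V> where V: "finite \<V>" "\<V> \<subseteq> \<U>" "S \<subseteq> \<Union>\<V>"
    using assms(1) unfolding compactin_def \<U>_def by (metis (no_types, lifting) mem_Collect_eq)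
  have "\<Union>\<V> \<in> \<U>" using V(1,2)
  proof (induction rule: finite_induct)
    case empty then show ?case unfolding \<U>_def using Q0 by simp
  next
    case (insert x F)
    then have "x \<in> \<U>" "\<Union>F \<in> \<U>" by auto
    then show ?case unfolding \<U>_def using QU by auto
  qed
  then show ?thesis using V(3) unfolding \<U>_def by blast
qed

context
  fixes T :: "'a topology" and le :: "'a \<Rightarrow> 'a \<Rightarrow> bool"
  assumes P: "priestley_space T le"
begin

lemma P_refl: "x \<in> topspace T \<Longrightarrow> le x x"
  using P unfolding priestley_space_def partial_order_rel_def by blast
lemma P_antisym: "x \<in> topspace T \<Longrightarrow> y \<in> topspace T \<Longrightarrow> le x y \<Longrightarrow> le y x \<Longrightarrow> x = y"
  using P unfolding priestley_space_def partial_order_rel_def by blast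
lemma P_trans: "x \<in> topspace T \<Longrightarrow> y \<in> topspace T \<Longrightarrow> z \<in> topspace T \<Longrightarrow> le x y \<Longrightarrow> le y z \<Longrightarrow> le x z"
  using P unfolding priestley_space_def partial_order_rel_def by blast
lemma P_cs: "compact_space T"
  using P unfolding priestley_space_def by blast
lemma P_sep: "x \<in> topspace T \<Longrightarrow> y \<in> topspace T \<Longrightarrow> \<not> le y x \<Longrightarrow>
   \<exists>U. openin T U \<and> closedin T U \<and> is_downset (topspace T) le U \<and> x \<in> U \<and> y \<notin> U"
  using P unfolding priestley_space_def by blast

lemma sep_clopen:
  assumes "x \<in> topspace T" "y \<in> topspace T" "x \<noteq> y"
  shows "\<exists>U. openin T U \<and> closedin T U \<and> x \<in> U \<and> y \<notin> U"
proof (cases "le y x")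
  case False then show ?thesis using P_sep[OF assms(1,2)] by blast
next
  case True
  then have "\<not> le x y" using P_antisym assms by blast
  then obtain U where U: "openin T U" "closedin T U" "y \<in> U" "x \<notin> U" using P_sep[OF assms(2,1)] by blast
  then show ?thesis using assms
    by (intro exI[of _ "topspace T - U"]) (auto intro: openin_diff closedin_diff)
qed

lemma zero_dim:
  assumes A: "openin T A" "x \<in> A"
  shows "\<exists>K. openin T K \<and> closedin T K \<and> x \<in> K \<and> K \<subseteq> A"
proof -
  have xX: "x \<in> topspace T" using A openin_subset by auto
  have "closedin T (topspace T - A)" using A by (simp add: closedin_diff)
  then have cC: "compactin T (topspace T - A)" using closedin_compact_space P_cs by blast
  have "\<exists>U. openin T U \<and> closedin T U \<and> topspace T - A \<subseteq> U \<and> x \<notin> U \<and> True"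
    by (rule compact_clopen_cover[OF cC]) (use sep_clopen xX A in \<open>auto\<close>)
  then obtain U where U: "openin T U" "closedin T U" "topspace T - A \<subseteq> U" "x \<notin> U" by blast
  show ?thesis using U xX
    by (intro exI[of _ "topspace T - U"]) (auto intro: openin_diff closedin_diff)
qed

lemma down_downset: "S \<subseteq> topspace T \<Longrightarrow> is_downset (topspace T) le (down T le S)"
  unfolding is_downset_def down_def using P_trans by blast

lemma down_closed:
  assumes S: "closedin T S" shows "closedin T (down T le S)"
  unfolding closedin_def
proof
  show "down T le S \<subseteq> topspace T" unfolding down_def by auto
  have SX: "S \<subseteq> topspace T" using S closedin_subset by auto
  have cS: "compactin T S" using closedin_compact_space P_cs S by blast
  show "openin T (topspace T - down T le S)"
  proof (subst openin_subopen, intro ballI)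
    fix w assume w: "w \<in> topspace T - down T le S"
    have "\<exists>U. openin T U \<and> closedin T U \<and> S \<subseteq> U \<and> w \<notin> U \<and> is_downset (topspace T) le U"
    proof (rule compact_clopen_cover[OF cS])
      show "\<forall>s\<in>S. \<exists>U. openin T U \<and> closedin T U \<and> s \<in> U \<and> w \<notin> U \<and> is_downset (topspace T) le U"
      proof
        fix s assume "s \<in> S"
        then have "\<not> le w s" "s \<in> topspace T" using w SX unfolding down_def by auto
        then show "\<exists>U. openin T U \<and> closedin T U \<and> s \<in> U \<and> w \<notin> U \<and> is_downset (topspace T) le U"
          using P_sep[of s w] w by blast
      qed
      show "is_downset (topspace T) le {}" unfolding is_downset_def by simp
      show "\<And>A B. is_downset (topspace T) le A \<Longrightarrow> is_downset (topspace T) le B \<Longrightarrow> is_downset (topspace T) le (A \<union> B)"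
        unfolding is_downset_def by blast
    qed
    then obtain U where U: "openin T U" "closedin T U" "S \<subseteq> U" "w \<notin> U" "is_downset (topspace T) le U" by blast
    have "topspace T - U \<subseteq> topspace T - down T le S"
      using U(3,5) unfolding down_def is_downset_def by blast
    then show "\<exists>V. openin T V \<and> w \<in> V \<and> V \<subseteq> topspace T - down T le S"
      using U w by (intro exI[of _ "topspace T - U"]) auto
  qed
qed

lemma dcc_min:
  assumes N: "noetherian_space T le" and ne: "\<A> \<noteq> {}"
    and cd: "\<forall>D\<in>\<A>. closedin T D \<and> is_downset (topspace T) le D"
  shows "\<exists>D\<in>\<A>. \<forall>D'\<in>\<A>. D' \<subseteq> D \<longrightarrow> D' = D"
proof (rule ccontr)
  assume "\<not> ?thesis"
  then have st: "\<forall>D\<in>\<A>. \<exists>D'\<in>\<A>. D' \<subset> D" by blast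
  define g where "g D = (SOME D'. D' \<in> \<A> \<and> D' \<subset> D)" for D
  have g: "g D \<in> \<A> \<and> g D \<subset> D" if "D \<in> \<A>" for D
  proof -
    have "\<exists>D'. D' \<in> \<A> \<and> D' \<subset> D" using st that by blast
    then show ?thesis unfolding g_def by (rule someI_ex)
  qed
  obtain D0 where D0: "D0 \<in> \<A>" using ne by blast
  define F where "F n = (g ^^ n) D0" for n
  have FA: "F n \<in> \<A>" for n
  proof (induction n)
    case 0 then show ?case using D0 unfolding F_def by simp
  next
    case (Suc n)
    have "F (Suc n) = g (F n)" unfolding F_def by simp
    then show ?case using g[OF Suc.IH] by simp
  qed
  have Fs: "F (Suc n) \<subset> F n" for n
  proof -
    have "F (Suc n) = g (F n)" unfolding F_def by simp
    then show ?thesis using g[OF FA[of n]] by simp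
  qed
  have imp: "(\<forall>n. closedin T (F n) \<and> is_downset (topspace T) le (F n)) \<and> (\<forall>n. F (Suc n) \<subseteq> F n) \<longrightarrow> (\<exists>N. \<forall>n\<ge>N. F n = F N)"
    using N unfolding noetherian_space_def by (rule spec)
  have "(\<forall>n. closedin T (F n) \<and> is_downset (topspace T) le (F n)) \<and> (\<forall>n. F (Suc n) \<subseteq> F n)"
    using FA cd Fs by auto
  with imp have "\<exists>N. \<forall>n\<ge>N. F n = F N" by blast
  then obtain N where NN: "\<forall>n\<ge>N. F n = F N" by blast
  from NN[rule_format, of "Suc N"] have "F (Suc N) = F N" by simp
  then show False using Fs[of N] by simp
qed

lemma scattered:
  assumes N: "noetherian_space T le" and Y: "closedin T Y" "Y \<noteq> {}"
  shows "\<exists>y V. openin T V \<and> V \<inter> Y = {y}"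
proof -
  have YX: "Y \<subseteq> topspace T" using Y closedin_subset by auto
  define \<A> where "\<A> = {down T le (Y \<inter> K) | K. openin T K \<and> closedin T K \<and> Y \<inter> K \<noteq> {}}"
  have "down T le (Y \<inter> topspace T) \<in> \<A>" unfolding \<A>_def using Y YX by blast
  then have "\<A> \<noteq> {}" by blast
  moreover have "\<forall>D\<in>\<A>. closedin T D \<and> is_downset (topspace T) le D"
    unfolding \<A>_def using Y YX by (auto intro!: down_closed down_downset)
  ultimately obtain D where D: "D \<in> \<A>" and Dmin: "\<forall>D'\<in>\<A>. D' \<subseteq> D \<longrightarrow> D' = D"
    using dcc_min[OF N] by blast
  then obtain K where K: "openin T K" "closedin T K" "Y \<inter> K \<noteq> {}" and DK: "D = down T le (Y \<inter> K)"
    unfolding \<A>_def by blast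
  have key: "le w y" if y: "y \<in> Y \<inter> K" and w: "w \<in> D" for y w
  proof (rule ccontr)
    assume nle: "\<not> le w y"
    have wX: "w \<in> topspace T" using w DK unfolding down_def by auto
    obtain U where U: "openin T U" "closedin T U" "is_downset (topspace T) le U" "y \<in> U" "w \<notin> U"
      using P_sep[of y w] nle wX y YX by blast
    have "down T le (Y \<inter> (K \<inter> U)) \<in> \<A>" unfolding \<A>_def using K U y
      by (auto intro!: exI[of _ "K \<inter> U"])
    moreover have "down T le (Y \<inter> (K \<inter> U)) \<subseteq> D" unfolding DK down_def by blast
    ultimately have "down T le (Y \<inter> (K \<inter> U)) = D" using Dmin by blast
    then have "w \<in> down T le (Y \<inter> (K \<inter> U))" using w by simp
    then obtain s where "s \<in> Y \<inter> (K \<inter> U)" "le w s" unfolding down_def by auto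
    then show False using U(3,5) wX unfolding is_downset_def by blast
  qed
  obtain y where y: "y \<in> Y \<inter> K" using K by blast
  have "Y \<inter> K = {y}"
  proof
    show "{y} \<subseteq> Y \<inter> K" using y by simp
    show "Y \<inter> K \<subseteq> {y}"
    proof
      fix z assume z: "z \<in> Y \<inter> K"
      have "z \<in> D" "y \<in> D" unfolding DK down_def using z y YX P_refl by auto
      then have "le z y" "le y z" using key z y by auto
      then show "z \<in> {y}" using P_antisym z y YX by auto
    qed
  qed
  then show ?thesis using K(1) by (metis inf_commute)
qed

lemma partition:
  assumes E: "sym_entourage T E"
  shows "\<exists>p k. (\<forall>x. p x < (k::nat)) \<and> (\<forall>i. openin T {x \<in> topspace T. p x = i}) \<and>
     (\<forall>x\<in>topspace T. \<forall>y\<in>topspace T. p x = p y \<longrightarrow> (x, y) \<in> E)"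
proof -
  obtain U where U: "openin (prod_topology T T) U" "(\<lambda>x. (x, x)) ` topspace T \<subseteq> U" "U \<subseteq> E"
    using E unfolding sym_entourage_def by blast
  define \<K> where "\<K> = {K. openin T K \<and> closedin T K \<and> K \<times> K \<subseteq> E}"
  have cov: "topspace T \<subseteq> \<Union>\<K>"
  proof
    fix x assume x: "x \<in> topspace T"
    then have xxU: "(x, x) \<in> U" using U by auto
    have "\<exists>A B. openin T A \<and> openin T B \<and> x \<in> A \<and> x \<in> B \<and> A \<times> B \<subseteq> U"
      using U(1)[unfolded openin_prod_topology_alt, rule_format, OF xxU] .
    then obtain A B where AB: "openin T A" "openin T B" "x \<in> A" "x \<in> B" "A \<times> B \<subseteq> U"
      by blast
    obtain K where K: "openin T K" "closedin T K" "x \<in> K" "K \<subseteq> A \<inter> B"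
      using zero_dim[of "A \<inter> B" x] AB by blast
    have "K \<times> K \<subseteq> A \<times> B" using K(4) by auto
    then have "K \<times> K \<subseteq> E" using AB(5) U(3) by (meson order_trans)
    then show "x \<in> \<Union>\<K>" using K unfolding \<K>_def by blast
  qed
  have "compactin T (topspace T)" using P_cs unfolding compact_space_def .
  then obtain \<V> where V: "finite \<V>" "\<V> \<subseteq> \<K>" "topspace T \<subseteq> \<Union>\<V>"
    using cov unfolding compactin_def \<K>_def by (metis (no_types, lifting) mem_Collect_eq)
  obtain Ks where Ks: "set Ks = \<V>" using V(1) finite_list by blast
  define n where "n = length Ks"
  define p where "p y = (if \<exists>i<n. y \<in> Ks ! i then LEAST i. y \<in> Ks ! i else n)" for y
  have Ksp: "Ks ! i \<in> \<K>" if "i < n" for i using that Ks V(2) unfolding n_def by auto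
  have covi: "\<exists>i<n. y \<in> Ks ! i" if yT: "y \<in> topspace T" for y
  proof -
    obtain K where K: "K \<in> set Ks" "y \<in> K" using yT V(3) Ks by blast
    then obtain i where "i < length Ks" "Ks ! i = K" by (auto simp: in_set_conv_nth)
    then show ?thesis using K unfolding n_def by blast
  qed
  have pin: "p y < n \<and> y \<in> Ks ! p y" if yT: "y \<in> topspace T" for y
  proof -
    obtain i where i: "i < n" "y \<in> Ks ! i" using covi[OF yT] by blast
    then have "p y = (LEAST i. y \<in> Ks ! i)" unfolding p_def by auto
    moreover have "(LEAST i. y \<in> Ks ! i) \<le> i" using i by (intro Least_le) 
    moreover have "y \<in> Ks ! (LEAST i. y \<in> Ks ! i)" using i by (intro LeastI)
    ultimately show ?thesis using i by auto
  qed
  have lev: "{x \<in> topspace T. p x = i} = (if i < n then (Ks ! i \<inter> topspace T) - \<Union>((!) Ks ` {..<i}) else {})" for i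
  proof (cases "i < n")
    case True
    have "x \<in> {x \<in> topspace T. p x = i} \<longleftrightarrow> x \<in> (Ks ! i \<inter> topspace T) - \<Union>((!) Ks ` {..<i})" for x
    proof
      assume x: "x \<in> {x \<in> topspace T. p x = i}"
      then have "x \<in> Ks ! i" "x \<in> topspace T" using pin by auto
      moreover have "x \<notin> Ks ! j" if "j < i" for j
      proof
        assume "x \<in> Ks ! j"
        then have "(LEAST i. x \<in> Ks ! i) \<le> j" by (rule Least_le)
        moreover have "p x = (LEAST i. x \<in> Ks ! i)" using \<open>x \<in> Ks ! j\<close> that True unfolding p_def by auto
        ultimately show False using x that by auto
      qed
      ultimately show "x \<in> (Ks ! i \<inter> topspace T) - \<Union>((!) Ks ` {..<i})" by auto
    next
      assume x: "x \<in> (Ks ! i \<inter> topspace T) - \<Union>((!) Ks ` {..<i})"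
      then have "p x = (LEAST i. x \<in> Ks ! i)" using True unfolding p_def by auto
      moreover have "(LEAST i. x \<in> Ks ! i) = i"
        using x by (intro Least_equality) (auto simp: not_less[symmetric])
      ultimately show "x \<in> {x \<in> topspace T. p x = i}" using x by auto
    qed
    then have "{x \<in> topspace T. p x = i} = (Ks ! i \<inter> topspace T) - \<Union>((!) Ks ` {..<i})"
      by (rule set_eqI)
    then show ?thesis using True by simp
  next
    case False
    have "p x \<noteq> i" if xT: "x \<in> topspace T" for x using pin[OF xT] False by auto
    then show ?thesis using False by auto
  qed
  have "openin T {x \<in> topspace T. p x = i}" for i
  proof (cases "i < n")
    case True
    have "closedin T (\<Union>((!) Ks ` {..<i}))"
      using Ksp True unfolding \<K>_def by (intro closedin_Union) auto
    moreover have "openin T (Ks ! i \<inter> topspace T)" using Ksp[OF True] unfolding \<K>_def by auto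
    ultimately show ?thesis using True by (subst lev) (auto intro: openin_diff)
  next
    case False then show ?thesis by (subst lev) simp
  qed
  moreover have "\<forall>x\<in>topspace T. \<forall>y\<in>topspace T. p x = p y \<longrightarrow> (x, y) \<in> E"
  proof (intro ballI impI)
    fix x y assume xy: "x \<in> topspace T" "y \<in> topspace T" "p x = p y"
    have "x \<in> Ks ! p x" "p x < n" using pin[OF xy(1)] by auto
    moreover have "y \<in> Ks ! p x" using pin[OF xy(2)] xy(3) by simp
    ultimately show "(x, y) \<in> E" using Ksp unfolding \<K>_def by blast
  qed
  moreover have "\<forall>x. p x < Suc n"
  proof
    fix x
    show "p x < Suc n"
    proof (cases "\<exists>i<n. x \<in> Ks ! i")
      case True
      then obtain i where i: "i < n" "x \<in> Ks ! i" by blast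
      have "(LEAST i. x \<in> Ks ! i) \<le> i" using i(2) by (rule Least_le)
      then show ?thesis using i True unfolding p_def by simp
    next
      case False
      have "p x = n" unfolding p_def using False by (rule if_not_P)
      then show ?thesis by simp
    qed
  qed
  ultimately show ?thesis by blast
qed

end


lemma xi_X: "xi T f I n \<subseteq> topspace T"
  by (induction n) auto

lemma itin_nth:
  "x \<in> xi T f I n \<Longrightarrow> i \<le> n \<Longrightarrow> (f ^^ i) x \<in> topspace T \<and> itin p f I (Suc n) x ! i = Some (p ((f ^^ i) x))"
proof (induction n arbitrary: x i)
  case 0 then show ?case by simp
next
  case (Suc n)
  then have x: "x \<in> topspace T" "x \<notin> I" "f x \<in> xi T f I n" by auto
  show ?case
  proof (cases i)
    case 0 then show ?thesis using x by simp
  next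
    case (Suc j)
    then have "j \<le> n" using Suc.prems by simp
    from Suc.IH[OF x(3) this] have "(f ^^ j) (f x) \<in> topspace T \<and> itin p f I (Suc n) (f x) ! j = Some (p ((f ^^ j) (f x)))" .
    moreover have "(f ^^ i) x = (f ^^ j) (f x)" using Suc by (simp only: funpow_Suc_right comp_def)
    ultimately show ?thesis using Suc x(2) by simp
  qed
qed

context pdyn begin

lemma sep_bounds:
  assumes Ep: "\<forall>x\<in>X. \<forall>y\<in>X. p x = p y \<longrightarrow> (x, y) \<in> E"
    and ne: "xi T f I n \<noteq> {}"
  shows "\<exists>s. sep_num T f I n E = ereal s \<and> 1 \<le> s \<and> s \<le> real (NN (Suc n) X)"
proof -
  define Sset where "Sset = {ereal (real (card F)) | F. finite F \<and> F \<subseteq> xi T f I n \<and>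
      (\<forall>x\<in>F. \<forall>y\<in>F. x \<noteq> y \<longrightarrow> x \<notin> bowen_ball T f I n E y)}"
  have sn: "sep_num T f I n E = Sup Sset" unfolding sep_num_def Sset_def ..
  have up: "a \<le> ereal (real (NN (Suc n) X))" if aS: "a \<in> Sset" for a
  proof -
    from aS obtain F where F: "a = ereal (real (card F))" "finite F" "F \<subseteq> xi T f I n"
      "\<forall>x\<in>F. \<forall>y\<in>F. x \<noteq> y \<longrightarrow> x \<notin> bowen_ball T f I n E y"
      unfolding Sset_def by (elim CollectE exE conjE) (rule that)
    have inj: "inj_on (it (Suc n)) F"
    proof (rule inj_onI, rule ccontr)
      fix x y assume xy: "x \<in> F" "y \<in> F" "it (Suc n) x = it (Suc n) y" "x \<noteq> y"
      have "x \<in> bowen_ball T f I n E y"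
        unfolding bowen_ball_def
      proof (intro CollectI conjI allI impI)
        show "x \<in> xi T f I n" using xy F(3) by auto
        fix i assume i: "i \<le> n"
        have hx: "(f ^^ i) x \<in> X \<and> it (Suc n) x ! i = Some (p ((f ^^ i) x))"
          using itin_nth[of x T f I n i p] xy F(3) i by auto
        have hy: "(f ^^ i) y \<in> X \<and> it (Suc n) y ! i = Some (p ((f ^^ i) y))"
          using itin_nth[of y T f I n i p] xy F(3) i by auto
        then have "p ((f ^^ i) y) = p ((f ^^ i) x)" using hx xy(3) by simp
        then show "((f ^^ i) y, (f ^^ i) x) \<in> E" using Ep hx hy by blast
      qed
      then show False using F(4) xy by blast
    qed
    have "card F = card (it (Suc n) ` F)" using card_image[OF inj] by simp
    also have "\<dots> \<le> NN (Suc n) X"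
    proof -
      have "F \<subseteq> X" using F(3) xi_X[of T f I n] by (rule order_trans)
      then have "it (Suc n) ` F \<subseteq> it (Suc n) ` X" by (rule image_mono)
      then show ?thesis unfolding NN_def by (intro card_mono finite_img)
    qed
    finally have "card F \<le> NN (Suc n) X" .
    then show ?thesis using F(1) by simp
  qed
  obtain x0 where x0: "x0 \<in> xi T f I n" using ne by blast
  have x0p: "finite {x0} \<and> {x0} \<subseteq> xi T f I n \<and>
      (\<forall>x\<in>{x0}. \<forall>y\<in>{x0}. x \<noteq> y \<longrightarrow> x \<notin> bowen_ball T f I n E y)" using x0 by simp
  have "ereal (real (card {x0})) \<in> Sset" unfolding Sset_def
    by (rule CollectI, rule exI[of _ "{x0}"], rule conjI[OF refl x0p])
  then have "ereal (real (card {x0})) \<le> Sup Sset" by (rule Sup_upper)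
  then have lo: "1 \<le> sep_num T f I n E" unfolding sn by (simp add: one_ereal_def)
  have hi: "sep_num T f I n E \<le> ereal (real (NN (Suc n) X))" unfolding sn by (rule Sup_least) (rule up)
  show ?thesis
  proof (cases "sep_num T f I n E" rule: ereal_cases)
    case (real r) then show ?thesis using lo hi by (auto simp: one_ereal_def)
  next
    case PInf then show ?thesis using hi by simp
  next
    case MInf then show ?thesis using lo by simp
  qed
qed

lemma limsup_zero:
  assumes Ep: "\<forall>x\<in>X. \<forall>y\<in>X. p x = p y \<longrightarrow> (x, y) \<in> E"
    and ne: "\<forall>n. xi T f I n \<noteq> {}"
  shows "limsup (growth_term T f I E) = 0"
proof -
  have gt: "\<exists>s. growth_term T f I E n = ereal (ln s / real n) \<and> 1 \<le> s \<and> s \<le> real (NN (Suc n) X)" for n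
  proof -
    obtain s where s: "sep_num T f I n E = ereal s" "1 \<le> s" "s \<le> real (NN (Suc n) X)"
      using sep_bounds[OF Ep ne[rule_format, of n]] by blast
    then show ?thesis unfolding growth_term_def by auto
  qed
  have Xne: "X \<noteq> {}" using ne[rule_format, of 0] by simp
  have NN0: "NN 0 X = 1" unfolding NN_def using Xne by (auto simp: image_constant_conv)
  have "limsup (growth_term T f I E) \<le> 0"
  proof (rule ereal_le_epsilon2)
    fix e :: real assume e: "0 < e"
    define \<epsilon> where "\<epsilon> = e / 3"
    have eps: "0 < \<epsilon>" unfolding \<epsilon>_def using e by simp
    obtain C where C: "\<forall>n. real (NN n X) \<le> C * exp (\<epsilon> * n)"
      using all_small[OF eps] unfolding small_def by blast
    have C1: "1 \<le> C" using C[rule_format, of 0] NN0 by simp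
    define L where "L = ln C"
    have L0: "0 \<le> L" unfolding L_def using C1 by simp
    define N0 where "N0 = nat \<lceil>L / \<epsilon>\<rceil> + 1"
    have "growth_term T f I E n \<le> ereal e" if n: "n \<ge> N0" for n
    proof -
      obtain s where s: "growth_term T f I E n = ereal (ln s / real n)" "1 \<le> s" "s \<le> real (NN (Suc n) X)"
        using gt by blast
      have n1: "real n \<ge> 1" using n unfolding N0_def by simp
      have "L / \<epsilon> \<le> real (nat \<lceil>L / \<epsilon>\<rceil>)" by linarith
      then have "L / \<epsilon> \<le> real n" using n unfolding N0_def by linarith
      then have Ln: "L \<le> \<epsilon> * n" using eps by (simp add: divide_le_eq mult.commute)
      have "s \<le> C * exp (\<epsilon> * Suc n)" using s(3) C[rule_format, of "Suc n"] by linarith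
      then have "ln s \<le> ln (C * exp (\<epsilon> * Suc n))" using s(2) by (subst ln_le_cancel_iff) auto
      also have "\<dots> = L + \<epsilon> * Suc n" unfolding L_def using C1 by (simp add: ln_mult)
      also have "\<dots> \<le> 3 * \<epsilon> * n"
      proof -
        have "\<epsilon> \<le> \<epsilon> * n" using n1 eps by simp
        then show ?thesis using Ln by (simp add: algebra_simps)
      qed
      finally have "ln s / n \<le> 3 * \<epsilon>" using n1 by (simp add: divide_le_eq mult.commute)
      then show ?thesis using s(1) unfolding \<epsilon>_def by simp
    qed
    then have "eventually (\<lambda>n. growth_term T f I E n \<le> ereal e) sequentially"
      unfolding eventually_sequentially by blast
    then have "limsup (growth_term T f I E) \<le> ereal e" by (rule Limsup_bounded)
    then show "limsup (growth_term T f I E) \<le> 0 + ereal e" by simp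
  qed
  moreover have "0 \<le> limsup (growth_term T f I E)"
  proof (rule le_Limsup)
    show "sequentially \<noteq> bot" by simp
    have "0 \<le> growth_term T f I E n" for n
    proof -
      obtain s where s: "growth_term T f I E n = ereal (ln s / real n)" "1 \<le> s"
        using gt by blast
      then show ?thesis by simp
    qed
    then show "\<forall>\<^sub>F x in sequentially. 0 \<le> growth_term T f I E x" by simp
  qed
  ultimately show ?thesis by simp
qed

end

theorem theorem3p9:
  fixes T :: "'a topology" and le :: "'a \<Rightarrow> 'a \<Rightarrow> bool" and f :: "'a \<Rightarrow> 'a" and I :: "'a set"
  assumes "priestley_space T le"
    and "noetherian_space T le"
    and "partially_continuous T f I"
    and "openin T I" and "closedin T I"
    and "\<forall>n. xi T f I n \<noteq> {}"
  shows "htop T f I = 0"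
proof -
  note P = assms(1) and N = assms(2)
  have cont: "continuous_map (subtopology T (topspace T - I)) T f"
    using assms(3) unfolding partially_continuous_def by simp
  have lz: "limsup (growth_term T f I E) = 0" if E: "sym_entourage T E" for E
  proof -
    have ex: "\<exists>p k. (\<forall>x. p x < (k::nat)) \<and> (\<forall>i. openin T {x \<in> topspace T. p x = i}) \<and>
     (\<forall>x\<in>topspace T. \<forall>y\<in>topspace T. p x = p y \<longrightarrow> (x, y) \<in> E)"
      by (rule partition[OF P E])
    obtain p and k :: nat where hp0: "(\<forall>x. p x < (k::nat)) \<and> (\<forall>i. openin T {x \<in> topspace T. p x = i}) \<and>
     (\<forall>x\<in>topspace T. \<forall>y\<in>topspace T. p x = p y \<longrightarrow> (x, y) \<in> E)"
      using ex by (elim exE) (erule that)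
    have hp: "\<forall>x. p x < k" "\<forall>i. openin T {x \<in> topspace T. p x = i}"
      "\<forall>x\<in>topspace T. \<forall>y\<in>topspace T. p x = p y \<longrightarrow> (x, y) \<in> E"
      using hp0 by auto
    interpret pdyn T f I p k
    proof
      show "compact_space T" using P_cs[OF P] .
      show "openin T I" "closedin T I" by fact+
      show "continuous_map (subtopology T (topspace T - I)) T f" by (rule cont)
      show "\<And>x. p x < k" using hp(1) by blast
      show "\<And>i. openin T {x \<in> topspace T. p x = i}" using hp(2) by blast
      show "\<And>Y. closedin T Y \<Longrightarrow> Y \<noteq> {} \<Longrightarrow> \<exists>y V. openin T V \<and> V \<inter> Y = {y}"
        using scattered[OF P N] by blast
    qed
    show ?thesis by (rule limsup_zero[OF hp(3) assms(6)])
  qed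
  have ne: "{E. sym_entourage T E} \<noteq> {}"
  proof -
    have o: "openin (prod_topology T T) (topspace T \<times> topspace T)"
      using openin_topspace[of "prod_topology T T"] by simp
    have "sym_entourage T (topspace T \<times> topspace T)"
      unfolding sym_entourage_def using o
      by (intro conjI exI[of _ "topspace T \<times> topspace T"]) auto
    then show ?thesis by blast
  qed
  have "(SUP E \<in> {E. sym_entourage T E}. limsup (growth_term T f I E)) = (SUP E \<in> {E. sym_entourage T E}. (0::ereal))"
    using lz by (intro SUP_cong) auto
  also have "\<dots> = 0" using ne by simp
  finally show ?thesis unfolding htop_def using assms(6) by simp
qed


end
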